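(* Let $p$ be a prime, $k\ge1$, $\Gamma=\mathbb{Z}_p\,\mathrm{wr}\,\mathbb{Z}^k=\Sigma\rtimes_\alpha\mathbb{Z}^k$ with $\Sigma=\bigoplus_{x\in\mathbb{Z}^k}A_x$, and let $\phi:\Gamma\to\Gamma$ be an automorphism with restriction $\phi'=\phi|_\Sigma$. Then $\phi'(\delta_0)=m\cdot\delta_{x_0}$ for some $x_0\in\mathbb{Z}^k$ and some $0\neq m\in\mathbb{Z}_p$.
   Context: $\mathbb{Z}_p\,\mathrm{wr}\,\mathbb{Z}^k$ is the semidirect product $\Sigma\rtimes_\alpha\mathbb{Z}^k$, where $\Sigma=\bigoplus_{x\in\mathbb{Z}^k}A_x$ (finitely supported elements), each $A_x\cong\mathbb{Z}_p$ is generated by $\delta_x$, and $\alpha(y)(\delta_x)=\delta_{y+x}$ for $y\in\mathbb{Z}^k$. $\Sigma$ is the torsion subgroup, hence characteristic, so $\phi(\Sigma)=\Sigma$. *)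

theory Defs
  imports "HOL-Computational_Algebra.Primes" "HOL-Algebra.Group"
begin

text \<open>The lattice Z^k, represented as integer vectors indexed by nat,
  vanishing outside the coordinates 0..k-1.\<close>
definition lattice :: "nat \<Rightarrow> (nat \<Rightarrow> int) set" where
  "lattice k = {v. \<forall>i\<ge>k. v i = 0}"

text \<open>Sigma = finitely supported functions Z^k -> Z_p (values in {0..<p}),
  zero outside Z^k.\<close>
definition Sigma_wr :: "nat \<Rightarrow> nat \<Rightarrow> ((nat \<Rightarrow> int) \<Rightarrow> int) set" where
  "Sigma_wr p k = {f. (\<forall>x. f x \<in> {0..<int p}) \<and> (\<forall>x. x \<notin> lattice k \<longrightarrow> f x = 0)
                      \<and> finite {x. f x \<noteq> 0}}"

text \<open>The shift action: alpha(y)(f)(x) = f(x - y), so alpha(y)(delta_x) = delta_(y+x).\<close>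
definition shift_act :: "(nat \<Rightarrow> int) \<Rightarrow> ((nat \<Rightarrow> int) \<Rightarrow> int) \<Rightarrow> ((nat \<Rightarrow> int) \<Rightarrow> int)" where
  "shift_act y f = (\<lambda>x. f (\<lambda>i. x i - y i))"

definition lamplighter :: "nat \<Rightarrow> nat \<Rightarrow> (((nat \<Rightarrow> int) \<Rightarrow> int) \<times> (nat \<Rightarrow> int)) monoid" where
  "lamplighter p k = \<lparr> carrier = Sigma_wr p k \<times> lattice k,
      mult = (\<lambda>(f, y) (g, z). ((\<lambda>x. (f x + shift_act y g x) mod int p), (\<lambda>i. y i + z i))),
      one = ((\<lambda>_. 0), (\<lambda>_. 0)) \<rparr>"

definition lamp :: "nat \<Rightarrow> int \<Rightarrow> (nat \<Rightarrow> int) \<Rightarrow> ((nat \<Rightarrow> int) \<Rightarrow> int)" where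
  "lamp p m x0 = (\<lambda>x. if x = x0 then m mod int p else 0)"

end

theory Submission
  imports Defs
begin

fun lev :: "int \<Rightarrow> ((nat \<Rightarrow> int) set) \<Rightarrow> nat \<Rightarrow> (nat \<Rightarrow> int) set" where
  "lev \<sigma> S 0 = S"
| "lev \<sigma> S (Suc i) = {x \<in> lev \<sigma> S i. \<sigma> * x i = Max ((\<lambda>x. \<sigma> * x i) ` lev \<sigma> S i)}"

lemma lev_sub: "lev \<sigma> S i \<subseteq> S"
  by (induction i) auto

lemma lev_mono: "i \<le> j \<Longrightarrow> lev \<sigma> S j \<subseteq> lev \<sigma> S i"
  by (induction j rule: dec_induct) auto

lemma lev_fin: "finite S \<Longrightarrow> finite (lev \<sigma> S i)"
  by (rule finite_subset[OF lev_sub])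

lemma lev_ne: "finite S \<Longrightarrow> S \<noteq> {} \<Longrightarrow> lev \<sigma> S i \<noteq> {}"
proof (induction i)
  case 0 then show ?case by simp
next
  case (Suc i)
  have "finite ((\<lambda>x. \<sigma> * x i) ` lev \<sigma> S i)" "((\<lambda>x. \<sigma> * x i) ` lev \<sigma> S i) \<noteq> {}"
    using Suc.IH Suc.prems lev_fin[of S \<sigma> i] by simp_all
  then have "Max ((\<lambda>x. \<sigma> * x i) ` lev \<sigma> S i) \<in> (\<lambda>x. \<sigma> * x i) ` lev \<sigma> S i"
    by (rule Max_in)
  then obtain x where "x \<in> lev \<sigma> S i" "\<sigma> * x i = Max ((\<lambda>x. \<sigma> * x i) ` lev \<sigma> S i)"
    by (metis (no_types, lifting) imageE)
  then have "x \<in> lev \<sigma> S (Suc i)" by simp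
  then show ?case by blast
qed

lemma lev_agree: "\<sigma> \<noteq> 0 \<Longrightarrow> x \<in> lev \<sigma> S i \<Longrightarrow> y \<in> lev \<sigma> S i \<Longrightarrow> j < i \<Longrightarrow> x j = y j"
proof (induction i arbitrary: j)
  case 0 then show ?case by simp
next
  case (Suc i)
  show ?case
  proof (cases "j < i")
    case True then show ?thesis using Suc by auto
  next
    case False
    then have "j = i" using Suc by auto
    then have "\<sigma> * x j = \<sigma> * y j" using Suc.prems by auto
    then show ?thesis using Suc.prems by auto
  qed
qed

lemma lev_single: assumes "\<sigma> \<noteq> 0" "finite S" "S \<noteq> {}" "S \<subseteq> lattice k"
  shows "\<exists>a. lev \<sigma> S k = {a}"
proof -
  obtain a where a: "a \<in> lev \<sigma> S k" using lev_ne[OF assms(2,3)] by blast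
  have "y = a" if "y \<in> lev \<sigma> S k" for y
  proof
    fix j show "y j = a j"
    proof (cases "j < k")
      case True then show ?thesis using lev_agree[OF assms(1) that a] by auto
    next
      case False
      then have "y \<in> lattice k" "a \<in> lattice k" using that a lev_sub assms(4) by blast+
      then show ?thesis using False by (simp add: lattice_def)
    qed
  qed
  then show ?thesis using a by blast
qed

definition tp :: "int \<Rightarrow> ((nat \<Rightarrow> int) set) \<Rightarrow> nat \<Rightarrow> (nat \<Rightarrow> int)" where
  "tp \<sigma> S k = the_elem (lev \<sigma> S k)"

lemma top_lev: assumes "\<sigma> \<noteq> 0" "finite S" "S \<noteq> {}" "S \<subseteq> lattice k"
  shows "lev \<sigma> S k = {tp \<sigma> S k}"
proof -
  obtain a where a: "lev \<sigma> S k = {a}" using lev_single[OF assms] by blast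
  then show ?thesis unfolding tp_def by simp
qed

lemma top_in: assumes "\<sigma> \<noteq> 0" "finite S" "S \<noteq> {}" "S \<subseteq> lattice k" "i \<le> k"
  shows "tp \<sigma> S k \<in> lev \<sigma> S i"
  using top_lev[OF assms(1-4)] lev_mono[OF assms(5), of \<sigma> S] by auto

lemma top_ge: assumes "\<sigma> \<noteq> 0" "finite S" "S \<noteq> {}" "S \<subseteq> lattice k" "i < k"
    "x \<in> lev \<sigma> S i"
  shows "\<sigma> * x i \<le> \<sigma> * tp \<sigma> S k i"
proof -
  have "tp \<sigma> S k \<in> lev \<sigma> S (Suc i)" using top_in[OF assms(1-4), of "Suc i"] assms(5) by simp
  then have "\<sigma> * tp \<sigma> S k i = Max ((\<lambda>x. \<sigma> * x i) ` lev \<sigma> S i)" by simp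
  moreover have "\<sigma> * x i \<le> Max ((\<lambda>x. \<sigma> * x i) ` lev \<sigma> S i)"
    using assms(6) lev_fin[OF assms(2)] by (intro Max_ge) auto
  ultimately show ?thesis by simp
qed

lemma top_step: assumes "\<sigma> \<noteq> 0" "finite S" "S \<noteq> {}" "S \<subseteq> lattice k" "i < k"
    "x \<in> lev \<sigma> S i" "x i = tp \<sigma> S k i"
  shows "x \<in> lev \<sigma> S (Suc i)"
proof -
  have "tp \<sigma> S k \<in> lev \<sigma> S (Suc i)" using top_in[OF assms(1-4), of "Suc i"] assms(5) by simp
  then show ?thesis using assms(6,7) by simp
qed

lemma top_unique: assumes "\<sigma> \<noteq> 0" "finite S" "S \<noteq> {}" "S \<subseteq> lattice k"
    "x \<in> lev \<sigma> S k" shows "x = tp \<sigma> S k"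
  using top_lev[OF assms(1-4)] assms(5) by auto

lemma L: assumes s: "\<sigma> = 1 \<or> \<sigma> = -1"
  and U: "finite U" "U \<noteq> {}" "U \<subseteq> lattice k"
  and W: "finite W" "W \<noteq> {}" "W \<subseteq> lattice k"
  and st: "s \<in> U" "t \<in> W" "\<And>i. s i + t i = tp \<sigma> U k i + tp \<sigma> W k i"
  shows "s = tp \<sigma> U k \<and> t = tp \<sigma> W k"
proof -
  have s0: "\<sigma> \<noteq> 0" using s by linarith
  have "i \<le> k \<Longrightarrow> s \<in> lev \<sigma> U i \<and> t \<in> lev \<sigma> W i" for i
  proof (induction i)
    case 0 then show ?case using st by simp
  next
    case (Suc i)
    then have i: "i < k" and h: "s \<in> lev \<sigma> U i" "t \<in> lev \<sigma> W i" by simp_all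
    have 1: "\<sigma> * s i \<le> \<sigma> * tp \<sigma> U k i" using top_ge[OF s0 U i h(1)] .
    have 2: "\<sigma> * t i \<le> \<sigma> * tp \<sigma> W k i" using top_ge[OF s0 W i h(2)] .
    have "\<sigma> * s i + \<sigma> * t i = \<sigma> * tp \<sigma> U k i + \<sigma> * tp \<sigma> W k i"
      using st(3)[of i] by (metis distrib_left)
    then have "\<sigma> * s i = \<sigma> * tp \<sigma> U k i" "\<sigma> * t i = \<sigma> * tp \<sigma> W k i" using 1 2 by linarith+
    then have "s i = tp \<sigma> U k i" "t i = tp \<sigma> W k i" using s0 by simp_all
    then show ?case using top_step[OF s0 U i h(1)] top_step[OF s0 W i h(2)] by auto
  qed
  then have "s \<in> lev \<sigma> U k" "t \<in> lev \<sigma> W k" by auto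
  then show ?thesis using top_unique[OF s0 U] top_unique[OF s0 W] by blast
qed

lemma key:
  assumes p: "prime p" and u: "u \<in> Sigma_wr p k" and B: "finite B" "B \<subseteq> lattice k"
  and eq: "\<And>x. (\<Sum>z\<in>B. w z * u (\<lambda>i. x i - z i)) mod int p = (if x = (\<lambda>_. 0) then 1 else 0)"
  shows "\<exists>a. {x. u x \<noteq> 0} = {a}"
proof -
  define U where "U = {x. u x \<noteq> 0}"
  define W where "W = {z\<in>B. w z mod int p \<noteq> 0}"
  have pp: "int p > 1" using p prime_gt_1_nat by auto
  have uv: "0 \<le> u x \<and> u x < int p" for x using u unfolding Sigma_wr_def by auto
  have Ufin: "finite U" using u unfolding Sigma_wr_def U_def by auto
  have Ulat: "U \<subseteq> lattice k" using u unfolding Sigma_wr_def U_def by auto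
  have Wfin: "finite W" using B unfolding W_def by auto
  have Wlat: "W \<subseteq> lattice k" using B unfolding W_def by auto
  have red: "(\<Sum>z\<in>B. w z * u (\<lambda>i. x i - z i)) mod int p =
     (\<Sum>z\<in>{z\<in>W. (\<lambda>i. x i - z i) \<in> U}. w z * u (\<lambda>i. x i - z i)) mod int p" for x
  proof -
    have "(\<Sum>z\<in>B. w z * u (\<lambda>i. x i - z i)) mod int p =
        (\<Sum>z\<in>B. (w z * u (\<lambda>i. x i - z i)) mod int p) mod int p" by (simp add: mod_sum_eq)
    also have "\<dots> = (\<Sum>z\<in>B. (if z \<in> W \<and> (\<lambda>i. x i - z i) \<in> U then w z * u (\<lambda>i. x i - z i) else 0) mod int p) mod int p"
    proof (rule arg_cong[where f="\<lambda>t. t mod int p"], rule sum.cong[OF refl])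
      fix z assume z: "z \<in> B"
      show "(w z * u (\<lambda>i. x i - z i)) mod int p = (if z \<in> W \<and> (\<lambda>i. x i - z i) \<in> U then w z * u (\<lambda>i. x i - z i) else 0) mod int p"
      proof (cases "z \<in> W")
        case False
        then have "w z mod int p = 0" using z unfolding W_def by auto
        then have "(w z * u (\<lambda>i. x i - z i)) mod int p = 0"
          by (metis mod_mult_left_eq mult_zero_left mod_0)
        then show ?thesis using False by simp
      qed (auto simp: U_def)
    qed
    also have "\<dots> = (\<Sum>z\<in>B. (if z \<in> W \<and> (\<lambda>i. x i - z i) \<in> U then w z * u (\<lambda>i. x i - z i) else 0)) mod int p"
      by (simp add: mod_sum_eq)
    also have "(\<Sum>z\<in>B. (if z \<in> W \<and> (\<lambda>i. x i - z i) \<in> U then w z * u (\<lambda>i. x i - z i) else 0))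
        = (\<Sum>z\<in>{z\<in>B. z \<in> W \<and> (\<lambda>i. x i - z i) \<in> U}. w z * u (\<lambda>i. x i - z i))"
      using B(1) by (simp add: sum.inter_filter)
    also have "{z\<in>B. z \<in> W \<and> (\<lambda>i. x i - z i) \<in> U} = {z\<in>W. (\<lambda>i. x i - z i) \<in> U}"
      unfolding W_def by auto
    finally show ?thesis .
  qed
  have x0: "(\<lambda>i. (0::int) - z i) = (\<lambda>i. - z i)" for z :: "nat \<Rightarrow> int" by simp
  have Une: "U \<noteq> {}"
  proof
    assume "U = {}"
    then have emp: "{z\<in>W. (\<lambda>i. (0::int) - z i) \<in> U} = {}" by simp
    have "(\<Sum>z\<in>B. w z * u (\<lambda>i. 0 - z i)) mod int p = 0" using red[of "\<lambda>_. 0"] unfolding emp by simp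
    then show False using eq[of "\<lambda>_. 0"] by simp
  qed
  have Wne: "W \<noteq> {}"
  proof
    assume "W = {}"
    then have emp: "{z\<in>W. (\<lambda>i. (0::int) - z i) \<in> U} = {}" by simp
    have "(\<Sum>z\<in>B. w z * u (\<lambda>i. 0 - z i)) mod int p = 0" using red[of "\<lambda>_. 0"] unfolding emp by simp
    then show False using eq[of "\<lambda>_. 0"] by simp
  qed
  have pint: "prime (int p)" using p by simp
  have sz: "(\<lambda>i. tp \<sigma> U k i + tp \<sigma> W k i) = (\<lambda>_. 0)" if s: "\<sigma> = 1 \<or> \<sigma> = -1" for \<sigma>
  proof -
    have s0: "\<sigma> \<noteq> 0" using s by linarith
    define a where "a = tp \<sigma> U k"
    define b where "b = tp \<sigma> W k"
    define c where "c = (\<lambda>i. a i + b i)"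
    have aU: "a \<in> U" using top_in[OF s0 Ufin Une Ulat, of k] lev_sub unfolding a_def by blast
    have bW: "b \<in> W" using top_in[OF s0 Wfin Wne Wlat, of k] lev_sub unfolding b_def by blast
    have cb: "(\<lambda>i. c i - b i) = a" unfolding c_def by simp
    have set: "{z\<in>W. (\<lambda>i. c i - z i) \<in> U} = {b}"
    proof
      show "{b} \<subseteq> {z\<in>W. (\<lambda>i. c i - z i) \<in> U}" using bW aU cb by simp
      show "{z\<in>W. (\<lambda>i. c i - z i) \<in> U} \<subseteq> {b}"
      proof
        fix z assume z: "z \<in> {z\<in>W. (\<lambda>i. c i - z i) \<in> U}"
        have "(\<lambda>i. c i - z i) = a \<and> z = b"
          unfolding a_def b_def
          by (rule L[OF s Ufin Une Ulat Wfin Wne Wlat]) (use z in \<open>auto simp: c_def a_def b_def\<close>)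
        then show "z \<in> {b}" by simp
      qed
    qed
    have "(w b * u a) mod int p = (if c = (\<lambda>_. 0) then 1 else 0)"
      using eq[of c] red[of c] unfolding set by (simp add: cb)
    moreover have "(w b * u a) mod int p \<noteq> 0"
    proof
      assume "(w b * u a) mod int p = 0"
      then have "int p dvd w b * u a" by auto
      then have "int p dvd w b \<or> int p dvd u a" using pint prime_dvd_mult_iff by blast
      moreover have "\<not> int p dvd w b" using bW unfolding W_def by auto
      moreover have "\<not> int p dvd u a"
      proof
        assume "int p dvd u a"
        moreover have "0 < u a" "u a < int p" using aU uv[of a] unfolding U_def by auto
        ultimately show False using zdvd_not_zless by blast
      qed
      ultimately show False by blast
    qed
    ultimately show ?thesis unfolding c_def a_def b_def by (auto split: if_splits)
  qed
  define a where "a = tp 1 U k"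
  define a' where "a' = tp (-1) U k"
  have s1: "(1::int) = 1 \<or> (1::int) = -1" "(-1::int) = 1 \<or> (-1::int) = -1" by auto
  have a'U: "a' \<in> U" using top_in[of "-1" U k k] Ufin Une Ulat lev_sub unfolding a'_def by force
  have b'W: "tp (-1) W k \<in> W" using top_in[of "-1" W k k] Wfin Wne Wlat lev_sub by force
  have "a' = a"
    using L[OF s1(1) Ufin Une Ulat Wfin Wne Wlat a'U b'W] sz[OF s1(1)] sz[OF s1(2)]
    unfolding a_def a'_def by (metis (no_types, lifting))
  have allU: "x = a" if x: "x \<in> U" for x
  proof -
    have "i \<le> k \<Longrightarrow> x \<in> lev 1 U i \<and> x \<in> lev (-1) U i" for i
    proof (induction i)
      case 0 then show ?case using x by simp
    next
      case (Suc i)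
      then have i: "i < k" and h: "x \<in> lev 1 U i" "x \<in> lev (-1) U i" by simp_all
      have "1 * x i \<le> 1 * a i" using top_ge[of 1 U k i x] Ufin Une Ulat i h unfolding a_def by simp
      moreover have "-1 * x i \<le> -1 * a' i" using top_ge[of "-1" U k i x] Ufin Une Ulat i h unfolding a'_def by simp
      ultimately have "x i = a i" "x i = a' i" using \<open>a' = a\<close> by simp_all
      then show ?case using top_step[of 1 U k i x] top_step[of "-1" U k i x] Ufin Une Ulat i h
        unfolding a_def a'_def by simp
    qed
    then have "x \<in> lev 1 U k" by simp
    then show ?thesis using top_unique[of 1 U k x] Ufin Une Ulat unfolding a_def by simp
  qed
  have "a \<in> U" using a'U \<open>a' = a\<close> by simp
  then have "U = {a}" using allU by blast
  then show ?thesis unfolding U_def by blast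
qed

lemma cong_cancel:
  fixes a b g P :: int
  assumes "0 \<le> a" "a < P" "0 \<le> b" "b < P" "(g + a) mod P = (b + g) mod P"
  shows "a = b"
proof -
  have "P dvd (g + a) - (b + g)" using assms(5) mod_eq_dvd_iff by blast
  then have d: "P dvd a - b" by (simp add: algebra_simps)
  show ?thesis
  proof (rule ccontr)
    assume "a \<noteq> b"
    then consider "0 < a - b" | "0 < b - a" by linarith
    then show False
    proof cases
      case 1 then show False using d zdvd_not_zless[of "a - b" P] assms by linarith
    next
      case 2
      have "P dvd b - a" using d by (metis dvd_diff_commute)
      then show False using 2 zdvd_not_zless[of "b - a" P] assms by linarith
    qed
  qed
qed

lemma carr: "carrier (lamplighter p k) = Sigma_wr p k \<times> lattice k"
  by (simp add: lamplighter_def)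

lemma one_ll: "\<one>\<^bsub>lamplighter p k\<^esub> = ((\<lambda>_. 0), (\<lambda>_. 0))"
  by (simp add: lamplighter_def)

lemma mult_ll: "a \<otimes>\<^bsub>lamplighter p k\<^esub> b =
   ((\<lambda>x. (fst a x + fst b (\<lambda>i. x i - snd a i)) mod int p), (\<lambda>i. snd a i + snd b i))"
  by (cases a, cases b) (simp add: lamplighter_def shift_act_def)

lemma lat_diff: "x \<notin> lattice k \<Longrightarrow> y \<in> lattice k \<Longrightarrow> (\<lambda>i. x i - y i) \<notin> lattice k"
  by (auto simp: lattice_def)

lemma closed_ll: assumes "p > 0" "a \<in> carrier (lamplighter p k)" "b \<in> carrier (lamplighter p k)"
  shows "a \<otimes>\<^bsub>lamplighter p k\<^esub> b \<in> carrier (lamplighter p k)"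
proof -
  obtain f y g z where a: "a = (f, y)" and b: "b = (g, z)" by (cases a, cases b) auto
  have f: "f \<in> Sigma_wr p k" and y: "y \<in> lattice k" and g: "g \<in> Sigma_wr p k" and z: "z \<in> lattice k"
    using assms a b by (auto simp: carr)
  define h where "h = (\<lambda>x. (f x + g (\<lambda>i. x i - y i)) mod int p)"
  have "{x. h x \<noteq> 0} \<subseteq> {x. f x \<noteq> 0} \<union> (\<lambda>x. (\<lambda>i. x i + y i)) ` {x. g x \<noteq> 0}"
  proof
    fix x assume "x \<in> {x. h x \<noteq> 0}"
    then have "f x \<noteq> 0 \<or> g (\<lambda>i. x i - y i) \<noteq> 0" unfolding h_def by auto
    then show "x \<in> {x. f x \<noteq> 0} \<union> (\<lambda>x. (\<lambda>i. x i + y i)) ` {x. g x \<noteq> 0}"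
    proof
      assume "f x \<noteq> 0" then show ?thesis by simp
    next
      assume "g (\<lambda>i. x i - y i) \<noteq> 0"
      then have m: "(\<lambda>i. x i - y i) \<in> {x. g x \<noteq> 0}" by simp
      have "x \<in> (\<lambda>x. (\<lambda>i. x i + y i)) ` {x. g x \<noteq> 0}" by (rule image_eqI[OF _ m]) simp
      then show ?thesis by (rule UnI2)
    qed
  qed
  moreover have "finite ({x. f x \<noteq> 0} \<union> (\<lambda>x. (\<lambda>i. x i + y i)) ` {x. g x \<noteq> 0})"
    using f g by (simp add: Sigma_wr_def)
  ultimately have fin: "finite {x. h x \<noteq> 0}" by (rule finite_subset)
  have "h \<in> Sigma_wr p k"
    unfolding Sigma_wr_def
  proof (intro CollectI conjI allI impI fin)
    fix x show "h x \<in> {0..<int p}" unfolding h_def using assms(1) by simp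
  next
    fix x assume "x \<notin> lattice k"
    then show "h x = 0" using lat_diff[OF _ y, of x] f g unfolding h_def Sigma_wr_def by auto
  qed
  moreover have "(\<lambda>i. y i + z i) \<in> lattice k" using y z by (simp add: lattice_def)
  ultimately show ?thesis using a b by (simp add: mult_ll carr h_def)
qed

fun pw :: "nat \<Rightarrow> nat \<Rightarrow> nat \<Rightarrow> ((nat \<Rightarrow> int) \<Rightarrow> int) \<times> (nat \<Rightarrow> int) \<Rightarrow> ((nat \<Rightarrow> int) \<Rightarrow> int) \<times> (nat \<Rightarrow> int)" where
  "pw p k 0 e = \<one>\<^bsub>lamplighter p k\<^esub>"
| "pw p k (Suc n) e = e \<otimes>\<^bsub>lamplighter p k\<^esub> pw p k n e"

lemma pw_carr: "p > 0 \<Longrightarrow> e \<in> carrier (lamplighter p k) \<Longrightarrow> pw p k n e \<in> carrier (lamplighter p k)"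
proof (induction n)
  case 0 then show ?case by (simp add: one_ll carr Sigma_wr_def lattice_def)
next
  case (Suc n) then show ?case using closed_ll by simp
qed

lemma pw_snd: "snd (pw p k n e) = (\<lambda>i. int n * snd e i)"
  by (induction n) (auto simp: one_ll mult_ll algebra_simps)

lemma pw_fst0: "snd e = (\<lambda>_. 0) \<Longrightarrow> fst (pw p k n e) = (\<lambda>x. (int n * fst e x) mod int p)"
proof (induction n)
  case 0 then show ?case by (simp add: one_ll)
next
  case (Suc n)
  then show ?case by (simp add: mult_ll algebra_simps mod_add_right_eq)
qed

lemma pw_hom: assumes "p > 0" "\<phi> \<in> hom (lamplighter p k) (lamplighter p k)"
  "\<phi> \<one>\<^bsub>lamplighter p k\<^esub> = \<one>\<^bsub>lamplighter p k\<^esub>" "e \<in> carrier (lamplighter p k)"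
  shows "\<phi> (pw p k n e) = pw p k n (\<phi> e)"
proof (induction n)
  case 0 then show ?case using assms by simp
next
  case (Suc n)
  have c: "pw p k n e \<in> carrier (lamplighter p k)" using pw_carr[OF assms(1,4)] .
  have "\<phi> (e \<otimes>\<^bsub>lamplighter p k\<^esub> pw p k n e) = \<phi> e \<otimes>\<^bsub>lamplighter p k\<^esub> \<phi> (pw p k n e)"
    using assms(2,4) c unfolding hom_def by blast
  then show ?case using Suc by simp
qed

lemma pw_tors: assumes "p > 0" "e \<in> carrier (lamplighter p k)" "snd e = (\<lambda>_. 0)"
  shows "pw p k p e = \<one>\<^bsub>lamplighter p k\<^esub>"
proof -
  have "fst (pw p k p e) = (\<lambda>_. 0)" using pw_fst0[OF assms(3)] by simp
  moreover have "snd (pw p k p e) = (\<lambda>_. 0)" using pw_snd assms(3) by simp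
  ultimately show ?thesis by (simp add: one_ll prod_eq_iff)
qed

lemma hom_one: assumes "p > 0" "\<phi> \<in> hom (lamplighter p k) (lamplighter p k)"
  shows "\<phi> \<one>\<^bsub>lamplighter p k\<^esub> = \<one>\<^bsub>lamplighter p k\<^esub>"
proof -
  let ?G = "lamplighter p k"
  have oc: "\<one>\<^bsub>?G\<^esub> \<in> carrier ?G" using assms(1) by (simp add: one_ll carr Sigma_wr_def lattice_def)
  have "\<one>\<^bsub>?G\<^esub> \<otimes>\<^bsub>?G\<^esub> \<one>\<^bsub>?G\<^esub> = \<one>\<^bsub>?G\<^esub>" by (simp add: one_ll mult_ll)
  then have e0: "\<phi> (\<one>\<^bsub>?G\<^esub> \<otimes>\<^bsub>?G\<^esub> \<one>\<^bsub>?G\<^esub>) = \<phi> \<one>\<^bsub>?G\<^esub>" by simp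
  have hm: "\<phi> (a \<otimes>\<^bsub>?G\<^esub> b) = \<phi> a \<otimes>\<^bsub>?G\<^esub> \<phi> b" if "a \<in> carrier ?G" "b \<in> carrier ?G" for a b
    using assms(2) that unfolding hom_def by blast
  have e: "\<phi> \<one>\<^bsub>?G\<^esub> = \<phi> \<one>\<^bsub>?G\<^esub> \<otimes>\<^bsub>?G\<^esub> \<phi> \<one>\<^bsub>?G\<^esub>"
    using e0 hm[OF oc oc] by simp
  obtain g y where gy: "\<phi> \<one>\<^bsub>?G\<^esub> = (g, y)" by (cases "\<phi> \<one>\<^bsub>?G\<^esub>") auto
  have "\<phi> \<one>\<^bsub>?G\<^esub> \<in> carrier ?G" using assms(2) oc unfolding hom_def by (blast intro: funcset_mem)
  then have gS: "g \<in> Sigma_wr p k" by (simp add: gy carr)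
  have yeq: "y = (\<lambda>i. y i + y i)" using e gy by (simp add: mult_ll)
  have "y i = 0" for i using arg_cong[where f="\<lambda>h. h i", OF yeq] by simp
  then have y0: "y = (\<lambda>_. 0)" by auto
  have geq: "g = (\<lambda>x. (g x + g (\<lambda>i. x i - y i)) mod int p)" using e gy by (simp add: mult_ll)
  then have geq2: "g = (\<lambda>x. (g x + g x) mod int p)" unfolding y0 by simp
  have gx: "g x = (g x + g x) mod int p" for x using arg_cong[where f="\<lambda>h. h x", OF geq2] by simp
  have gv: "0 \<le> g x \<and> g x < int p" for x using gS by (auto simp: Sigma_wr_def)
  have "g x = 0" for x
  proof -
    have "(g x + 0) mod int p = (g x + g x) mod int p" using gx[of x] gv[of x] by simp
    then show ?thesis using cong_cancel[of 0 "int p" "g x" "g x"] gv[of x] assms(1) by simp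
  qed
  then have "g = (\<lambda>_. 0)" by auto
  then show ?thesis using gy y0 by (simp add: one_ll)
qed

lemma lamp_S: "y \<in> lattice k \<Longrightarrow> p > 0 \<Longrightarrow> lamp p c y \<in> Sigma_wr p k"
proof -
  assume y: "y \<in> lattice k" and p: "p > 0"
  have "{x. lamp p c y x \<noteq> 0} \<subseteq> {y}" by (auto simp: lamp_def split: if_splits)
  then have "finite {x. lamp p c y x \<noteq> 0}" by (rule finite_subset) simp
  then show ?thesis using y p unfolding Sigma_wr_def lamp_def by auto
qed

definition rs :: "((nat \<Rightarrow> int) \<Rightarrow> int) \<Rightarrow> (nat \<Rightarrow> int) set \<Rightarrow> ((nat \<Rightarrow> int) \<Rightarrow> int)" where
  "rs s A = (\<lambda>x. if x \<in> A then s x else 0)"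

lemma rs_S: "s \<in> Sigma_wr p k \<Longrightarrow> p > 0 \<Longrightarrow> rs s A \<in> Sigma_wr p k"
proof -
  assume s: "s \<in> Sigma_wr p k" and p: "p > 0"
  have "{x. rs s A x \<noteq> 0} \<subseteq> {x. s x \<noteq> 0}" by (auto simp: rs_def split: if_splits)
  moreover have "finite {x. s x \<noteq> 0}" using s by (simp add: Sigma_wr_def)
  ultimately have "finite {x. rs s A x \<noteq> 0}" by (rule finite_subset)
  then show ?thesis using s p unfolding Sigma_wr_def rs_def by auto
qed

lemma zero_lat: "(\<lambda>_. 0) \<in> lattice k" by (simp add: lattice_def)

theorem lemma3p1:
  fixes p k :: nat and \<phi> :: "((nat \<Rightarrow> int) \<Rightarrow> int) \<times> (nat \<Rightarrow> int) \<Rightarrow> ((nat \<Rightarrow> int) \<Rightarrow> int) \<times> (nat \<Rightarrow> int)"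
  assumes "prime p" and "k \<ge> 1"
    and "\<phi> \<in> iso (lamplighter p k) (lamplighter p k)"
  shows "\<exists>x0 \<in> lattice k. \<exists>m :: int. m \<in> {1..<int p} \<and>
           \<phi> (lamp p 1 (\<lambda>_. 0), (\<lambda>_. 0)) = (lamp p m x0, (\<lambda>_. 0))"
proof -
  let ?G = "lamplighter p k"
  have p0: "p > 0" using assms(1) prime_gt_0_nat by blast
  have p1: "int p > 1" using assms(1) prime_gt_1_nat by auto
  have hom: "\<phi> \<in> hom ?G ?G" and bij: "bij_betw \<phi> (carrier ?G) (carrier ?G)"
    using assms(3) by (auto simp: iso_def)
  have hm: "\<phi> (a \<otimes>\<^bsub>?G\<^esub> b) = \<phi> a \<otimes>\<^bsub>?G\<^esub> \<phi> b" if "a \<in> carrier ?G" "b \<in> carrier ?G" for a b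
    using hom that unfolding hom_def by blast
  have fc: "\<phi> a \<in> carrier ?G" if "a \<in> carrier ?G" for a
    using hom that unfolding hom_def by (blast intro: funcset_mem)
  have ph1: "\<phi> \<one>\<^bsub>?G\<^esub> = \<one>\<^bsub>?G\<^esub>" using hom_one[OF p0 hom] .
  have sig: "snd (\<phi> (s, \<lambda>_. 0)) = (\<lambda>_. 0)" if s: "s \<in> Sigma_wr p k" for s
  proof -
    have ec: "(s, \<lambda>_. 0) \<in> carrier ?G" using s zero_lat by (simp add: carr)
    have "pw p k p (s, \<lambda>_. 0) = \<one>\<^bsub>?G\<^esub>" using pw_tors[OF p0 ec] by simp
    then have "pw p k p (\<phi> (s, \<lambda>_. 0)) = \<one>\<^bsub>?G\<^esub>"
      using pw_hom[OF p0 hom ph1 ec, of p] ph1 by simp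
    then have "snd (pw p k p (\<phi> (s, \<lambda>_. 0))) = (\<lambda>_. 0)" by (simp add: one_ll)
    then have "(\<lambda>i. int p * snd (\<phi> (s, \<lambda>_. 0)) i) = (\<lambda>_. 0)" by (simp add: pw_snd)
    then have "int p * snd (\<phi> (s, \<lambda>_. 0)) i = 0" for i by metis
    then have "snd (\<phi> (s, \<lambda>_. 0)) i = 0" for i using p0 by simp
    then show ?thesis by auto
  qed
  define \<delta> where "\<delta> = lamp p 1 (\<lambda>_. 0)"
  have \<delta>S: "\<delta> \<in> Sigma_wr p k" unfolding \<delta>_def by (rule lamp_S[OF zero_lat p0])
  have \<delta>c: "(\<delta>, \<lambda>_. 0) \<in> carrier ?G" using \<delta>S zero_lat by (simp add: carr)
  have \<delta>x: "\<delta> x = (if x = (\<lambda>_. 0) then 1 else 0)" for x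
    using p1 unfolding \<delta>_def lamp_def by simp
  define u where "u = fst (\<phi> (\<delta>, \<lambda>_. 0))"
  have phd: "\<phi> (\<delta>, \<lambda>_. 0) = (u, \<lambda>_. 0)" using sig[OF \<delta>S] unfolding u_def by (simp add: prod_eq_iff)
  have uS: "u \<in> Sigma_wr p k" using fc[OF \<delta>c] phd by (simp add: carr)
  define \<psi> where "\<psi> y = snd (\<phi> ((\<lambda>_. 0), y))" for y
  have zc: "((\<lambda>_. 0), y) \<in> carrier ?G" if "y \<in> lattice k" for y
    using that p0 by (simp add: carr Sigma_wr_def)
  have \<psi>lat: "\<psi> y \<in> lattice k" if "y \<in> lattice k" for y
    using fc[OF zc[OF that]] unfolding \<psi>_def by (auto simp: carr)
  have lampc: "\<phi> (lamp p c y, \<lambda>_. 0) = ((\<lambda>x. (c * u (\<lambda>i. x i - \<psi> y i)) mod int p), \<lambda>_. 0)"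
    if c: "0 \<le> c" "c < int p" and y: "y \<in> lattice k" for c y
  proof -
    have pwd: "pw p k (nat c) (\<delta>, \<lambda>_. 0) = (lamp p c (\<lambda>_. 0), \<lambda>_. 0)"
    proof (rule prod_eqI)
      show "fst (pw p k (nat c) (\<delta>, \<lambda>_. 0)) = fst (lamp p c (\<lambda>_. 0), \<lambda>_. 0)"
        using c by (auto simp: pw_fst0 \<delta>x lamp_def)
      show "snd (pw p k (nat c) (\<delta>, \<lambda>_. 0)) = snd (lamp p c (\<lambda>_. 0), \<lambda>_. 0)"
        by (simp add: pw_snd)
    qed
    have uc: "(u, \<lambda>_. 0) \<in> carrier ?G" using uS zero_lat by (simp add: carr)
    have H: "\<phi> (lamp p c (\<lambda>_. 0), \<lambda>_. 0) = ((\<lambda>x. (c * u x) mod int p), \<lambda>_. 0)"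
    proof -
      have "\<phi> (lamp p c (\<lambda>_. 0), \<lambda>_. 0) = pw p k (nat c) (u, \<lambda>_. 0)"
        using pw_hom[OF p0 hom ph1 \<delta>c, of "nat c"] pwd phd by simp
      also have "\<dots> = ((\<lambda>x. (c * u x) mod int p), \<lambda>_. 0)"
        using c by (simp add: prod_eq_iff pw_fst0 pw_snd)
      finally show ?thesis .
    qed
    have l0c: "(lamp p c (\<lambda>_. 0), \<lambda>_. 0) \<in> carrier ?G" using lamp_S[OF zero_lat p0] zero_lat by (simp add: carr)
    have lyS: "lamp p c y \<in> Sigma_wr p k" using lamp_S[OF y p0] .
    have lyc: "(lamp p c y, \<lambda>_. 0) \<in> carrier ?G" using lyS zero_lat by (simp add: carr)
    have eqv: "((\<lambda>i. x i - y i) = (\<lambda>_. 0)) = (x = y)" for x :: "nat \<Rightarrow> int"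
      by (auto simp: fun_eq_iff)
    have comm: "((\<lambda>_. 0), y) \<otimes>\<^bsub>?G\<^esub> (lamp p c (\<lambda>_. 0), \<lambda>_. 0) = (lamp p c y, \<lambda>_. 0) \<otimes>\<^bsub>?G\<^esub> ((\<lambda>_. 0), y)"
      by (simp add: mult_ll lamp_def eqv)
    obtain g z where gz: "\<phi> ((\<lambda>_. 0), y) = (g, z)" by (cases "\<phi> ((\<lambda>_. 0), y)") auto
    have z: "z = \<psi> y" unfolding \<psi>_def gz by simp
    define G' where "G' = fst (\<phi> (lamp p c y, \<lambda>_. 0))"
    have phy: "\<phi> (lamp p c y, \<lambda>_. 0) = (G', \<lambda>_. 0)" using sig[OF lyS] unfolding G'_def by (simp add: prod_eq_iff)
    have G'S: "G' \<in> Sigma_wr p k" using fc[OF lyc] phy by (simp add: carr)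
    have "\<phi> ((\<lambda>_. 0), y) \<otimes>\<^bsub>?G\<^esub> \<phi> (lamp p c (\<lambda>_. 0), \<lambda>_. 0) = \<phi> (lamp p c y, \<lambda>_. 0) \<otimes>\<^bsub>?G\<^esub> \<phi> ((\<lambda>_. 0), y)"
      using hm[OF zc[OF y] l0c] hm[OF lyc zc[OF y]] comm by simp
    then have "(g, z) \<otimes>\<^bsub>?G\<^esub> ((\<lambda>x. (c * u x) mod int p), \<lambda>_. 0) = (G', \<lambda>_. 0) \<otimes>\<^bsub>?G\<^esub> (g, z)"
      using gz H phy by simp
    then have fe: "(\<lambda>x. (g x + (c * u (\<lambda>i. x i - z i)) mod int p) mod int p) = (\<lambda>x. (G' x + g x) mod int p)"
      by (simp add: mult_ll)
    have "G' x = (c * u (\<lambda>i. x i - z i)) mod int p" for x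
    proof -
      have "(g x + (c * u (\<lambda>i. x i - z i)) mod int p) mod int p = (G' x + g x) mod int p"
        using arg_cong[where f="\<lambda>h. h x", OF fe] by simp
      moreover have "0 \<le> G' x" "G' x < int p" using G'S by (auto simp: Sigma_wr_def)
      ultimately show ?thesis using cong_cancel[of "(c * u (\<lambda>i. x i - z i)) mod int p" "int p" "G' x" "g x"] p0
        by simp
    qed
    then show ?thesis using phy z by auto
  qed
  have sumlem: "fst (\<phi> (rs s A, \<lambda>_. 0)) = (\<lambda>x. (\<Sum>y\<in>A. s y * u (\<lambda>i. x i - \<psi> y i)) mod int p)"
    if s: "s \<in> Sigma_wr p k" and A: "finite A" "A \<subseteq> {x. s x \<noteq> 0}" for s A
    using A
  proof (induction A rule: finite_induct)
    case empty
    have "(rs s {}, \<lambda>_. 0) = \<one>\<^bsub>?G\<^esub>" by (simp add: rs_def one_ll)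
    then show ?case using ph1 by (simp add: one_ll)
  next
    case (insert y A)
    have yA: "y \<notin> A" and IH: "fst (\<phi> (rs s A, \<lambda>_. 0)) = (\<lambda>x. (\<Sum>y\<in>A. s y * u (\<lambda>i. x i - \<psi> y i)) mod int p)"
      using insert by auto
    have sy: "s y \<noteq> 0" using insert by auto
    have sv: "0 \<le> s x \<and> s x < int p" for x using s by (auto simp: Sigma_wr_def)
    have ylat: "y \<in> lattice k" using sy s by (auto simp: Sigma_wr_def)
    have rA: "rs s A \<in> Sigma_wr p k" using rs_S[OF s p0] .
    have rAc: "(rs s A, \<lambda>_. 0) \<in> carrier ?G" using rA zero_lat by (simp add: carr)
    have lyc: "(lamp p (s y) y, \<lambda>_. 0) \<in> carrier ?G" using lamp_S[OF ylat p0] zero_lat by (simp add: carr)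
    have dec: "(rs s A, \<lambda>_. 0) \<otimes>\<^bsub>?G\<^esub> (lamp p (s y) y, \<lambda>_. 0) = (rs s (insert y A), \<lambda>_. 0)"
    proof -
      have "(rs s A x + lamp p (s y) y x) mod int p = rs s (insert y A) x" for x
        using yA sv[of x] sv[of y] by (auto simp: rs_def lamp_def)
      then show ?thesis by (simp add: mult_ll)
    qed
    have phA: "\<phi> (rs s A, \<lambda>_. 0) = (fst (\<phi> (rs s A, \<lambda>_. 0)), \<lambda>_. 0)" using sig[OF rA] by (simp add: prod_eq_iff)
    have "\<phi> (rs s (insert y A), \<lambda>_. 0) = \<phi> (rs s A, \<lambda>_. 0) \<otimes>\<^bsub>?G\<^esub> \<phi> (lamp p (s y) y, \<lambda>_. 0)"
      using hm[OF rAc lyc] dec by simp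
    also have "\<dots> = (fst (\<phi> (rs s A, \<lambda>_. 0)), \<lambda>_. 0) \<otimes>\<^bsub>?G\<^esub> ((\<lambda>x. (s y * u (\<lambda>i. x i - \<psi> y i)) mod int p), \<lambda>_. 0)"
      using phA lampc[of "s y" y] sv[of y] ylat by simp
    finally have "fst (\<phi> (rs s (insert y A), \<lambda>_. 0)) = (\<lambda>x. ((\<Sum>y\<in>A. s y * u (\<lambda>i. x i - \<psi> y i)) mod int p + (s y * u (\<lambda>i. x i - \<psi> y i)) mod int p) mod int p)"
      using IH by (simp add: mult_ll)
    also have "\<dots> = (\<lambda>x. (\<Sum>y\<in>insert y A. s y * u (\<lambda>i. x i - \<psi> y i)) mod int p)"
      using insert(1) yA by (simp add: mod_add_eq add.commute)
    finally show ?case .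
  qed
  have "(\<delta>, \<lambda>_. 0) \<in> \<phi> ` carrier ?G" using bij \<delta>c unfolding bij_betw_def by simp
  then obtain e where pe0: "(\<delta>, \<lambda>_. 0) = \<phi> e" and ec: "e \<in> carrier ?G" by (rule imageE)
  have pe: "\<phi> e = (\<delta>, \<lambda>_. 0)" using pe0 by simp
  have "\<phi> (pw p k p e) = \<one>\<^bsub>?G\<^esub>"
    using pw_hom[OF p0 hom ph1 ec, of p] pe pw_tors[OF p0 \<delta>c] by simp
  then have "\<phi> (pw p k p e) = \<phi> \<one>\<^bsub>?G\<^esub>" using ph1 by simp
  moreover have "pw p k p e \<in> carrier ?G" using pw_carr[OF p0 ec] .
  moreover have "\<one>\<^bsub>?G\<^esub> \<in> carrier ?G" using p0 by (simp add: one_ll carr Sigma_wr_def lattice_def)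
  ultimately have "pw p k p e = \<one>\<^bsub>?G\<^esub>" using bij unfolding bij_betw_def inj_on_def by blast
  then have "(\<lambda>i. int p * snd e i) = (\<lambda>_. 0)" using pw_snd[of p k p e] by (simp add: one_ll)
  then have "int p * snd e i = 0" for i by metis
  then have "snd e i = 0" for i using p0 by simp
  then have se: "snd e = (\<lambda>_. 0)" by auto
  define s where "s = fst e"
  have eS: "e = (s, \<lambda>_. 0)" using se unfolding s_def by (simp add: prod_eq_iff)
  have sS: "s \<in> Sigma_wr p k" using ec eS by (simp add: carr)
  define S where "S = {x. s x \<noteq> 0}"
  have Sfin: "finite S" using sS unfolding S_def Sigma_wr_def by auto
  have Slat: "S \<subseteq> lattice k" using sS unfolding S_def Sigma_wr_def by auto
  have "rs s S = s" unfolding rs_def S_def by auto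
  then have "fst (\<phi> (s, \<lambda>_. 0)) = (\<lambda>x. (\<Sum>y\<in>S. s y * u (\<lambda>i. x i - \<psi> y i)) mod int p)"
    using sumlem[OF sS Sfin] unfolding S_def by simp
  then have eq1: "(\<Sum>y\<in>S. s y * u (\<lambda>i. x i - \<psi> y i)) mod int p = (if x = (\<lambda>_. 0) then 1 else 0)" for x
    using pe eS \<delta>x[of x] by (metis fst_conv)
  define w where "w z = (\<Sum>y\<in>{y. y \<in> S \<and> \<psi> y = z}. s y)" for z
  have regroup: "(\<Sum>y\<in>S. s y * u (\<lambda>i. x i - \<psi> y i)) = (\<Sum>z\<in>\<psi> ` S. w z * u (\<lambda>i. x i - z i))" for x
  proof -
    have "(\<Sum>y\<in>S. s y * u (\<lambda>i. x i - \<psi> y i)) =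
        (\<Sum>z\<in>\<psi> ` S. \<Sum>y\<in>{y. y \<in> S \<and> \<psi> y = z}. s y * u (\<lambda>i. x i - \<psi> y i))"
      using sum.image_gen[OF Sfin, of "\<lambda>y. s y * u (\<lambda>i. x i - \<psi> y i)" \<psi>] .
    also have "\<dots> = (\<Sum>z\<in>\<psi> ` S. \<Sum>y\<in>{y. y \<in> S \<and> \<psi> y = z}. s y * u (\<lambda>i. x i - z i))"
      by (rule sum.cong[OF refl], rule sum.cong) auto
    also have "\<dots> = (\<Sum>z\<in>\<psi> ` S. w z * u (\<lambda>i. x i - z i))"
      unfolding w_def by (simp add: sum_distrib_right)
    finally show ?thesis .
  qed
  have Bfin: "finite (\<psi> ` S)" using Sfin by simp
  have Blat: "\<psi> ` S \<subseteq> lattice k" using Slat \<psi>lat by auto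
  obtain a where a: "{x. u x \<noteq> 0} = {a}"
    using key[OF assms(1) uS Bfin Blat, of w] eq1 regroup by auto
  have uv: "0 \<le> u x \<and> u x < int p" for x using uS by (auto simp: Sigma_wr_def)
  have ua: "u a \<noteq> 0" using a by auto
  have alat: "a \<in> lattice k" using uS ua unfolding Sigma_wr_def by auto
  have "u = lamp p (u a) a"
  proof
    fix x show "u x = lamp p (u a) a x"
      using a uv[of x] by (auto simp: lamp_def)
  qed
  then have "\<phi> (lamp p 1 (\<lambda>_. 0), (\<lambda>_. 0)) = (lamp p (u a) a, (\<lambda>_. 0))"
    using phd unfolding \<delta>_def by simp
  moreover have "u a \<in> {1..<int p}" using ua uv[of a] by auto
  ultimately show ?thesis using alat by blast
qed

end
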